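(* Let $(X,\tau)$ be a topological space, $\mathcal{V}\in T(\tau)$, $\mathcal{B}=\mathcal{B}(\mathcal{V}_\omega)$, and let $U\in\mathcal{V}$ be a transitive entourage. Then $U(A)\in\mathcal{B}$ for every $A\subseteq X$.
   Context: Quasi-uniformities and quasi-proximities are in the sense of Fletcher–Lindgren. For a quasi-uniformity $\mathcal{V}$, $\delta(\mathcal{V})$ is the induced quasi-proximity; $\pi(\delta)$ is the set of quasi-uniformities inducing $\delta$, and $\mathcal{V}_\omega$ denotes the coarsest element of $\pi(\delta(\mathcal{V}))$ (it is totally bounded). $T(\tau)$ is the set of compatible transitive quasi-uniformities on $(X,\tau)$ (transitive = having a base of entourages $U$ with $U\circ U\subseteq U$). For $U\subseteq X\times X$ and $A\subseteq X$, $U(x)=\{y:(x,y)\in U\}$ and $U(A)=\bigcup_{a\in A}U(a)$. For $N\subseteq X$, $U_N=(N\times N)\cup((X\setminus N)\times X)$, and for a compatible quasi-uniformity $\mathcal{W}$, $\mathcal{B}(\mathcal{W})=\{N\in\tau:U_N\in\mathcal{W}\}$. *)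

theory Defs
  imports "HOL-Analysis.Analysis"
begin

definition quasi_uniformity :: "'a set \<Rightarrow> ('a \<times> 'a) set set \<Rightarrow> bool" where
  "quasi_uniformity X \<U> \<longleftrightarrow>
     \<U> \<noteq> {} \<and>
     (\<forall>U\<in>\<U>. Id_on X \<subseteq> U \<and> U \<subseteq> X \<times> X) \<and>
     (\<forall>U V. U \<in> \<U> \<and> U \<subseteq> V \<and> V \<subseteq> X \<times> X \<longrightarrow> V \<in> \<U>) \<and>
     (\<forall>U\<in>\<U>. \<forall>V\<in>\<U>. U \<inter> V \<in> \<U>) \<and>
     (\<forall>U\<in>\<U>. \<exists>V\<in>\<U>. V O V \<subseteq> U)"

definition qu_compatible :: "'a topology \<Rightarrow> ('a \<times> 'a) set set \<Rightarrow> bool" where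
  "qu_compatible \<tau> \<U> \<longleftrightarrow>
     (\<forall>G. openin \<tau> G \<longleftrightarrow> G \<subseteq> topspace \<tau> \<and> (\<forall>x\<in>G. \<exists>U\<in>\<U>. U `` {x} \<subseteq> G))"

definition qu_transitive :: "('a \<times> 'a) set set \<Rightarrow> bool" where
  "qu_transitive \<U> \<longleftrightarrow> (\<forall>U\<in>\<U>. \<exists>V\<in>\<U>. V O V \<subseteq> V \<and> V \<subseteq> U)"

definition Tqu :: "'a topology \<Rightarrow> ('a \<times> 'a) set set set" where
  "Tqu \<tau> = {\<U>. quasi_uniformity (topspace \<tau>) \<U> \<and> qu_compatible \<tau> \<U> \<and> qu_transitive \<U>}"

definition qprox :: "'a set \<Rightarrow> ('a \<times> 'a) set set \<Rightarrow> ('a set \<times> 'a set) set" where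
  "qprox X \<U> = {(A, B). A \<subseteq> X \<and> B \<subseteq> X \<and> (\<forall>U\<in>\<U>. (A \<times> B) \<inter> U \<noteq> {})}"

definition qprox_class :: "'a set \<Rightarrow> ('a set \<times> 'a set) set \<Rightarrow> ('a \<times> 'a) set set set" where
  "qprox_class X \<delta> = {\<W>. quasi_uniformity X \<W> \<and> qprox X \<W> = \<delta>}"

definition qu_omega :: "'a set \<Rightarrow> ('a \<times> 'a) set set \<Rightarrow> ('a \<times> 'a) set set" where
  "qu_omega X \<V> = (THE \<W>. \<W> \<in> qprox_class X (qprox X \<V>) \<and>
                          (\<forall>\<W>'\<in>qprox_class X (qprox X \<V>). \<W> \<subseteq> \<W>'))"

definition UN_ent :: "'a set \<Rightarrow> 'a set \<Rightarrow> ('a \<times> 'a) set" where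
  "UN_ent X N = (N \<times> N) \<union> ((X - N) \<times> X)"

definition Bset :: "'a topology \<Rightarrow> ('a \<times> 'a) set set \<Rightarrow> 'a set set" where
  "Bset \<tau> \<W> = {N. openin \<tau> N \<and> UN_ent (topspace \<tau>) N \<in> \<W>}"

end

theory Submission
  imports Defs
begin

definition Sent :: "'a set \<Rightarrow> 'a set \<Rightarrow> 'a set \<Rightarrow> ('a \<times> 'a) set" where
  "Sent X A B = ((X - A) \<times> X) \<union> (X \<times> (X - B))"

definition nd :: "'a set \<Rightarrow> ('a \<times> 'a) set set \<Rightarrow> ('a set \<times> 'a set) set" where
  "nd X V = {(A, B). A \<subseteq> X \<and> B \<subseteq> X \<and> (\<exists>U\<in>V. (A \<times> B) \<inter> U = {})}"

definition W0 :: "'a set \<Rightarrow> ('a \<times> 'a) set set \<Rightarrow> ('a \<times> 'a) set set" where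
  "W0 X V = {W. W \<subseteq> X \<times> X \<and> (\<exists>F. finite F \<and> F \<subseteq> nd X V \<and>
      X \<times> X \<inter> (\<Inter>p\<in>F. Sent X (fst p) (snd p)) \<subseteq> W)}"

lemma qprox_nd: "(A, B) \<in> qprox X V \<longleftrightarrow> A \<subseteq> X \<and> B \<subseteq> X \<and> (A, B) \<notin> nd X V"
  unfolding qprox_def nd_def by auto

lemma qu_p1: assumes "quasi_uniformity X W" shows "W \<noteq> {}"
  using assms unfolding quasi_uniformity_def by (elim conjE) assumption

lemma qu_p2: assumes "quasi_uniformity X W" shows "\<forall>U\<in>W. Id_on X \<subseteq> U \<and> U \<subseteq> X \<times> X"
  using assms unfolding quasi_uniformity_def by (elim conjE) assumption

lemma qu_p3: assumes "quasi_uniformity X W" shows "\<forall>U V. U \<in> W \<and> U \<subseteq> V \<and> V \<subseteq> X \<times> X \<longrightarrow> V \<in> W"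
  using assms unfolding quasi_uniformity_def by (elim conjE) assumption

lemma qu_p4: assumes "quasi_uniformity X W" shows "\<forall>U\<in>W. \<forall>V\<in>W. U \<inter> V \<in> W"
  using assms unfolding quasi_uniformity_def by (elim conjE) assumption

lemma qu_p5: assumes "quasi_uniformity X W" shows "\<forall>U\<in>W. \<exists>V\<in>W. V O V \<subseteq> U"
  using assms unfolding quasi_uniformity_def by (elim conjE) assumption

lemma qu_sq: "quasi_uniformity X W \<Longrightarrow> U \<in> W \<Longrightarrow> \<exists>V\<in>W. V O V \<subseteq> U"
  using qu_p5 by blast
lemma qu_sub: "quasi_uniformity X W \<Longrightarrow> U \<in> W \<Longrightarrow> U \<subseteq> X \<times> X"
  using qu_p2 by blast
lemma qu_refl: "quasi_uniformity X W \<Longrightarrow> U \<in> W \<Longrightarrow> Id_on X \<subseteq> U"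
  using qu_p2 by blast
lemma qu_up: "quasi_uniformity X W \<Longrightarrow> U \<in> W \<Longrightarrow> U \<subseteq> V \<Longrightarrow> V \<subseteq> X \<times> X \<Longrightarrow> V \<in> W"
  using qu_p3 by blast
lemma qu_int: "quasi_uniformity X W \<Longrightarrow> U \<in> W \<Longrightarrow> V \<in> W \<Longrightarrow> U \<inter> V \<in> W"
  using qu_p4 by blast

lemma qu_top: assumes "quasi_uniformity X W" shows "X \<times> X \<in> W"
proof -
  from qu_p1[OF assms] obtain U where U: "U \<in> W" by blast
  show ?thesis by (rule qu_up[OF assms U qu_sub[OF assms U] order_refl])
qed

lemma fin_int0:
  assumes top: "X \<times> X \<in> W" and cl: "\<forall>a\<in>W. \<forall>b\<in>W. a \<inter> b \<in> W" and "finite F"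
  shows "(\<forall>p\<in>F. g p \<in> W) \<longrightarrow> X \<times> X \<inter> (\<Inter>p\<in>F. g p) \<in> W"
  using assms(3)
proof (induction F rule: finite_induct)
  case empty
  then show ?case using top by simp
next
  case (insert x F)
  show ?case
  proof
    assume h: "\<forall>p\<in>insert x F. g p \<in> W"
    then have a: "X \<times> X \<inter> (\<Inter>p\<in>F. g p) \<in> W" using insert by auto
    have b: "g x \<in> W" using h by auto
    have "g x \<inter> (X \<times> X \<inter> (\<Inter>p\<in>F. g p)) \<in> W"
      using cl a b by blast
    moreover have "g x \<inter> (X \<times> X \<inter> (\<Inter>p\<in>F. g p)) = X \<times> X \<inter> (\<Inter>p\<in>insert x F. g p)"
      by auto
    ultimately show "X \<times> X \<inter> (\<Inter>p\<in>insert x F. g p) \<in> W" by simp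
  qed
qed

lemma fin_int:
  assumes qu: "quasi_uniformity X W" and "finite F"
  shows "(\<forall>p\<in>F. g p \<in> W) \<longrightarrow> X \<times> X \<inter> (\<Inter>p\<in>F. g p) \<in> W"
  by (rule fin_int0[OF qu_top[OF qu] _ assms(2)]) (use qu_int[OF qu] in blast)

lemma nd_mono: "(A, B) \<in> nd X V \<Longrightarrow> A' \<subseteq> A \<Longrightarrow> B' \<subseteq> B \<Longrightarrow> (A', B') \<in> nd X V"
  unfolding nd_def by blast

lemma nd_un1:
  assumes qu: "quasi_uniformity X V" and "(A1, B) \<in> nd X V" "(A2, B) \<in> nd X V"
  shows "(A1 \<union> A2, B) \<in> nd X V"
proof -
  obtain U1 U2 where "U1 \<in> V" "U2 \<in> V" "(A1 \<times> B) \<inter> U1 = {}" "(A2 \<times> B) \<inter> U2 = {}"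
    "A1 \<subseteq> X" "A2 \<subseteq> X" "B \<subseteq> X"
    using assms unfolding nd_def by auto
  moreover have "U1 \<inter> U2 \<in> V" by (rule qu_int[OF qu \<open>U1 \<in> V\<close> \<open>U2 \<in> V\<close>])
  ultimately show ?thesis unfolding nd_def by (auto intro!: bexI[of _ "U1 \<inter> U2"])
qed

lemma nd_un2:
  assumes qu: "quasi_uniformity X V" and "(A, B1) \<in> nd X V" "(A, B2) \<in> nd X V"
  shows "(A, B1 \<union> B2) \<in> nd X V"
proof -
  obtain U1 U2 where "U1 \<in> V" "U2 \<in> V" "(A \<times> B1) \<inter> U1 = {}" "(A \<times> B2) \<inter> U2 = {}"
    "B1 \<subseteq> X" "B2 \<subseteq> X" "A \<subseteq> X"
    using assms unfolding nd_def by auto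
  moreover have "U1 \<inter> U2 \<in> V" by (rule qu_int[OF qu \<open>U1 \<in> V\<close> \<open>U2 \<in> V\<close>])
  ultimately show ?thesis unfolding nd_def by (auto intro!: bexI[of _ "U1 \<inter> U2"])
qed

lemma nd_empty:
  assumes qu: "quasi_uniformity X V" and "A \<subseteq> X" "B \<subseteq> X" "A \<times> B = {}"
  shows "(A, B) \<in> nd X V"
  using assms qu_top[OF qu] unfolding nd_def by auto

lemma cover:
  assumes qu: "quasi_uniformity X V" and "finite F"
  shows "F \<subseteq> nd X V \<longrightarrow> (\<forall>A B. A \<subseteq> X \<longrightarrow> B \<subseteq> X \<longrightarrow> A \<times> B \<subseteq> (\<Union>p\<in>F. fst p \<times> snd p)
     \<longrightarrow> (A, B) \<in> nd X V)"
  using assms(2)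
proof (induction F rule: finite_induct)
  case empty
  then show ?case using nd_empty[OF qu] by auto
next
  case (insert p F)
  obtain C D where p: "p = (C, D)" by force
  show ?case
  proof (intro impI allI)
    fix A B
    assume F: "insert p F \<subseteq> nd X V" and AX: "A \<subseteq> X" and BX: "B \<subseteq> X"
      and cov: "A \<times> B \<subseteq> (\<Union>p\<in>insert p F. fst p \<times> snd p)"
    have IH: "\<And>A B. A \<subseteq> X \<Longrightarrow> B \<subseteq> X \<Longrightarrow> A \<times> B \<subseteq> (\<Union>p\<in>F. fst p \<times> snd p) \<Longrightarrow> (A, B) \<in> nd X V"
      using insert F by auto
    have CD: "(C, D) \<in> nd X V" using F p by auto
    have 1: "(A - C, B) \<in> nd X V"
      by (rule IH) (use AX BX cov p in auto)
    have 2: "(A \<inter> C, B - D) \<in> nd X V"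
      by (rule IH) (use AX BX cov p in auto)
    have 3: "(A \<inter> C, B \<inter> D) \<in> nd X V"
      by (rule nd_mono[OF CD]) auto
    have "(A \<inter> C, (B \<inter> D) \<union> (B - D)) \<in> nd X V" by (rule nd_un2[OF qu 3 2])
    moreover have "(B \<inter> D) \<union> (B - D) = B" by auto
    ultimately have 4: "(A \<inter> C, B) \<in> nd X V" by simp
    have "((A - C) \<union> (A \<inter> C), B) \<in> nd X V" by (rule nd_un1[OF qu 1 4])
    moreover have "(A - C) \<union> (A \<inter> C) = A" by auto
    ultimately show "(A, B) \<in> nd X V" by simp
  qed
qed

lemma Sent_sub: "Sent X A B \<subseteq> X \<times> X" unfolding Sent_def by auto

lemma W0I: "Z \<subseteq> X \<times> X \<Longrightarrow> finite F \<Longrightarrow> F \<subseteq> nd X V \<Longrightarrow>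
   X \<times> X \<inter> (\<Inter>p\<in>F. Sent X (fst p) (snd p)) \<subseteq> Z \<Longrightarrow> Z \<in> W0 X V"
  unfolding W0_def mem_Collect_eq by (intro conjI exI)

lemma W0E: "Z \<in> W0 X V \<Longrightarrow> (\<And>F. Z \<subseteq> X \<times> X \<Longrightarrow> finite F \<Longrightarrow> F \<subseteq> nd X V \<Longrightarrow>
   X \<times> X \<inter> (\<Inter>p\<in>F. Sent X (fst p) (snd p)) \<subseteq> Z \<Longrightarrow> P) \<Longrightarrow> P"
  unfolding W0_def mem_Collect_eq by (elim conjE exE)

lemma Sent_W0: "(A, B) \<in> nd X V \<Longrightarrow> Sent X A B \<in> W0 X V"
  by (rule W0I[OF Sent_sub, of "{(A, B)}"]) simp_all

lemma W0_int: "W1 \<in> W0 X V \<Longrightarrow> W2 \<in> W0 X V \<Longrightarrow> W1 \<inter> W2 \<in> W0 X V"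
proof -
  assume a1: "W1 \<in> W0 X V" and a2: "W2 \<in> W0 X V"
  obtain F1 where F1: "W1 \<subseteq> X \<times> X" "finite F1" "F1 \<subseteq> nd X V"
    "X \<times> X \<inter> (\<Inter>p\<in>F1. Sent X (fst p) (snd p)) \<subseteq> W1" by (rule W0E[OF a1])
  obtain F2 where F2: "W2 \<subseteq> X \<times> X" "finite F2" "F2 \<subseteq> nd X V"
    "X \<times> X \<inter> (\<Inter>p\<in>F2. Sent X (fst p) (snd p)) \<subseteq> W2" by (rule W0E[OF a2])
  have "X \<times> X \<inter> (\<Inter>p\<in>F1 \<union> F2. Sent X (fst p) (snd p)) \<subseteq> W1 \<inter> W2"
    unfolding INT_Un using F1(4) F2(4) by blast
  then show ?thesis
    by (rule W0I[rotated 3]) (use F1 F2 in auto)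
qed

lemma W0_top: "X \<times> X \<in> W0 X V"
  by (rule W0I[of _ _ "{}"]) simp_all

lemma Sent_in:
  assumes qu: "quasi_uniformity X W" and eq: "qprox X W = qprox X V" and nd: "(A, B) \<in> nd X V"
  shows "Sent X A B \<in> W"
proof -
  have AB: "A \<subseteq> X" "B \<subseteq> X" using nd unfolding nd_def by auto
  have "(A, B) \<notin> qprox X V" using nd qprox_nd by blast
  then have "(A, B) \<notin> qprox X W" using eq by simp
  then have "(A, B) \<in> nd X W" using AB qprox_nd by blast
  then obtain U where U: "U \<in> W" "(A \<times> B) \<inter> U = {}" unfolding nd_def by blast
  have "U \<subseteq> X \<times> X" using qu_sub[OF qu U(1)] .
  then have "U \<subseteq> Sent X A B" using U unfolding Sent_def by auto
  then show ?thesis using qu_up[OF qu U(1) _ Sent_sub[of X A B]] by blast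
qed

lemma W0_sub:
  assumes qu: "quasi_uniformity X W" and eq: "qprox X W = qprox X V"
  shows "W0 X V \<subseteq> W"
proof
  fix Z assume "Z \<in> W0 X V"
  then obtain F where F: "Z \<subseteq> X \<times> X" "finite F" "F \<subseteq> nd X V"
    "X \<times> X \<inter> (\<Inter>p\<in>F. Sent X (fst p) (snd p)) \<subseteq> Z"
    by (rule W0E)
  have "\<forall>p\<in>F. Sent X (fst p) (snd p) \<in> W" using F Sent_in[OF qu eq] by auto
  then have "X \<times> X \<inter> (\<Inter>p\<in>F. Sent X (fst p) (snd p)) \<in> W"
    using fin_int[OF qu F(2), of "\<lambda>p. Sent X (fst p) (snd p)"] by blast
  then show "Z \<in> W" using qu_up[OF qu _ F(4) F(1)] by blast
qed

lemma nd_disj: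
  assumes qu: "quasi_uniformity X V" and "(A, B) \<in> nd X V" shows "A \<inter> B = {}"
proof -
  obtain U where U: "U \<in> V" "(A \<times> B) \<inter> U = {}" "A \<subseteq> X" using assms(2) unfolding nd_def by blast
  have "Id_on X \<subseteq> U" using qu_refl[OF qu U(1)] .
  then show ?thesis using U by auto
qed

lemma Sent_sq:
  assumes qu: "quasi_uniformity X V" and nd: "(A, B) \<in> nd X V"
  shows "\<exists>Z\<in>W0 X V. Z O Z \<subseteq> Sent X A B"
proof -
  obtain U0 where U0: "U0 \<in> V" "(A \<times> B) \<inter> U0 = {}" and AX: "A \<subseteq> X" and BX: "B \<subseteq> X"
  proof -
    have "A \<subseteq> X \<and> B \<subseteq> X \<and> (\<exists>U\<in>V. (A \<times> B) \<inter> U = {})" using nd unfolding nd_def by simp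
    then show ?thesis using that by blast
  qed
  obtain U1 where U1: "U1 \<in> V" "U1 O U1 \<subseteq> U0" using qu_sq[OF qu U0(1)] by blast
  have U1X: "U1 \<subseteq> X \<times> X" using qu_sub[OF qu U1(1)] .
  define C where "C = U1 `` A"
  have CX: "C \<subseteq> X" using U1X unfolding C_def by auto
  have "(A \<times> (X - C)) \<inter> U1 = {}" unfolding C_def by auto
  then have n1: "(A, X - C) \<in> nd X V" unfolding nd_def using AX U1 by blast
  have "(C \<times> B) \<inter> U1 = {}"
  proof (rule ccontr)
    assume "(C \<times> B) \<inter> U1 \<noteq> {}"
    then obtain c b where cb: "c \<in> C" "b \<in> B" "(c, b) \<in> U1" by auto
    then obtain a where a: "a \<in> A" "(a, c) \<in> U1" unfolding C_def by auto
    then have "(a, b) \<in> U0" using cb U1(2) by blast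
    then show False using a cb U0 by blast
  qed
  then have n2: "(C, B) \<in> nd X V" unfolding nd_def using CX BX U1 by blast
  define Z where "Z = Sent X A (X - C) \<inter> Sent X C B"
  have "Z \<in> W0 X V" unfolding Z_def by (rule W0_int[OF Sent_W0[OF n1] Sent_W0[OF n2]])
  moreover have "Z O Z \<subseteq> Sent X A B"
  proof
    fix q assume "q \<in> Z O Z"
    then obtain x y z where q: "q = (x, z)" "(x, y) \<in> Z" "(y, z) \<in> Z" by blast
    then have xyz: "x \<in> X" "y \<in> X" "z \<in> X" unfolding Z_def Sent_def by auto
    show "q \<in> Sent X A B"
    proof (cases "x \<in> A")
      case True
      then have "y \<in> C" using q(2) xyz unfolding Z_def Sent_def by auto
      then have "z \<notin> B" using q(3) unfolding Z_def Sent_def by auto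
      then show ?thesis using q xyz unfolding Sent_def by auto
    next
      case False
      then show ?thesis using q xyz unfolding Sent_def by auto
    qed
  qed
  ultimately show ?thesis by blast
qed

lemma W0_refl:
  assumes qu: "quasi_uniformity X V" and Z: "Z \<in> W0 X V"
  shows "Id_on X \<subseteq> Z \<and> Z \<subseteq> X \<times> X"
proof -
  obtain F where F: "Z \<subseteq> X \<times> X" "finite F" "F \<subseteq> nd X V"
    "X \<times> X \<inter> (\<Inter>p\<in>F. Sent X (fst p) (snd p)) \<subseteq> Z"
    by (rule W0E[OF Z])
  have "Id_on X \<subseteq> Z"
  proof
    fix q assume q: "q \<in> Id_on X"
    then obtain x where x: "q = (x, x)" "x \<in> X" by (auto simp: Id_on_def)
    have "\<forall>p\<in>F. q \<in> Sent X (fst p) (snd p)"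
    proof
      fix p assume "p \<in> F"
      then have "(fst p, snd p) \<in> nd X V" using F(3) by auto
      then have "fst p \<inter> snd p = {}" by (rule nd_disj[OF qu])
      then show "q \<in> Sent X (fst p) (snd p)" using x unfolding Sent_def by auto
    qed
    then have "q \<in> X \<times> X \<inter> (\<Inter>p\<in>F. Sent X (fst p) (snd p))" using x by auto
    then show "q \<in> Z" using F(4) by blast
  qed
  then show ?thesis using F(1) by blast
qed

lemma W0_up: "Z \<in> W0 X V \<Longrightarrow> Z \<subseteq> Y \<Longrightarrow> Y \<subseteq> X \<times> X \<Longrightarrow> Y \<in> W0 X V"
proof -
  assume h: "Z \<in> W0 X V" "Z \<subseteq> Y" "Y \<subseteq> X \<times> X"
  obtain F where F: "Z \<subseteq> X \<times> X" "finite F" "F \<subseteq> nd X V"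
    "X \<times> X \<inter> (\<Inter>p\<in>F. Sent X (fst p) (snd p)) \<subseteq> Z" by (rule W0E[OF h(1)])
  show "Y \<in> W0 X V" by (rule W0I[OF h(3) F(2) F(3)]) (use F(4) h(2) in blast)
qed

lemma W0_sq:
  assumes qu: "quasi_uniformity X V" and Z: "Z \<in> W0 X V"
  shows "\<exists>Y\<in>W0 X V. Y O Y \<subseteq> Z"
proof -
  obtain F where F: "Z \<subseteq> X \<times> X" "finite F" "F \<subseteq> nd X V"
    "X \<times> X \<inter> (\<Inter>p\<in>F. Sent X (fst p) (snd p)) \<subseteq> Z"
    by (rule W0E[OF Z])
  have "\<forall>p\<in>F. \<exists>Y. Y \<in> W0 X V \<and> Y O Y \<subseteq> Sent X (fst p) (snd p)"
  proof
    fix p assume "p \<in> F"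
    then have "(fst p, snd p) \<in> nd X V" using F(3) by auto
    then show "\<exists>Y. Y \<in> W0 X V \<and> Y O Y \<subseteq> Sent X (fst p) (snd p)"
      using Sent_sq[OF qu] by blast
  qed
  then have "\<exists>g. \<forall>p\<in>F. g p \<in> W0 X V \<and> g p O g p \<subseteq> Sent X (fst p) (snd p)"
    by (rule bchoice)
  then obtain g where g: "\<forall>p\<in>F. g p \<in> W0 X V \<and> g p O g p \<subseteq> Sent X (fst p) (snd p)"
    by blast
  have gW: "\<forall>p\<in>F. g p \<in> W0 X V" using g by blast
  have cl: "\<forall>a\<in>W0 X V. \<forall>b\<in>W0 X V. a \<inter> b \<in> W0 X V" using W0_int by blast
  have "(\<forall>p\<in>F. g p \<in> W0 X V) \<longrightarrow> X \<times> X \<inter> (\<Inter>p\<in>F. g p) \<in> W0 X V"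
    by (rule fin_int0[OF W0_top cl F(2)])
  then have Y: "X \<times> X \<inter> (\<Inter>p\<in>F. g p) \<in> W0 X V" using gW by blast
  have "(X \<times> X \<inter> (\<Inter>p\<in>F. g p)) O (X \<times> X \<inter> (\<Inter>p\<in>F. g p)) \<subseteq> Z"
  proof
    fix q assume "q \<in> (X \<times> X \<inter> (\<Inter>p\<in>F. g p)) O (X \<times> X \<inter> (\<Inter>p\<in>F. g p))"
    then obtain x y z where q: "q = (x, z)" "(x, y) \<in> X \<times> X \<inter> (\<Inter>p\<in>F. g p)"
      "(y, z) \<in> X \<times> X \<inter> (\<Inter>p\<in>F. g p)" by blast
    have "\<forall>p\<in>F. q \<in> Sent X (fst p) (snd p)"
    proof
      fix p assume p: "p \<in> F"
      then have "(x, y) \<in> g p" "(y, z) \<in> g p" using q by auto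
      then have "(x, z) \<in> g p O g p" by blast
      then show "q \<in> Sent X (fst p) (snd p)" using g p q(1) by blast
    qed
    moreover have "q \<in> X \<times> X" using q by auto
    ultimately show "q \<in> Z" using F(4) by blast
  qed
  then show ?thesis using Y by blast
qed

lemma W0_qu:
  assumes qu: "quasi_uniformity X V"
  shows "quasi_uniformity X (W0 X V)"
  unfolding quasi_uniformity_def
  apply (intro conjI)
  subgoal using W0_top by blast
  subgoal using W0_refl[OF qu] by blast
  subgoal using W0_up by blast
  subgoal using W0_int by blast
  subgoal using W0_sq[OF qu] by blast
  done

lemma W0_nd:
  assumes qu: "quasi_uniformity X V"
  shows "nd X (W0 X V) = nd X V"
proof (intro set_eqI iffI)
  fix q assume "q \<in> nd X V"
  obtain A B where q: "q = (A, B)" by force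
  then have "(A, B) \<in> nd X V" using \<open>q \<in> nd X V\<close> by simp
  then have AB: "A \<subseteq> X" "B \<subseteq> X" unfolding nd_def by auto
  have "(A \<times> B) \<inter> Sent X A B = {}" unfolding Sent_def by auto
  then show "q \<in> nd X (W0 X V)" using q Sent_W0[OF \<open>(A, B) \<in> nd X V\<close>] AB
    unfolding nd_def by blast
next
  fix q assume "q \<in> nd X (W0 X V)"
  obtain A B where q: "q = (A, B)" by force
  then obtain Z where Z: "Z \<in> W0 X V" "(A \<times> B) \<inter> Z = {}" and AX: "A \<subseteq> X" and BX: "B \<subseteq> X"
    using \<open>q \<in> nd X (W0 X V)\<close> unfolding nd_def by auto
  obtain F where F: "finite F" "F \<subseteq> nd X V"
    "X \<times> X \<inter> (\<Inter>p\<in>F. Sent X (fst p) (snd p)) \<subseteq> Z"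
    by (rule W0E[OF Z(1)])
  have "A \<times> B \<subseteq> (\<Union>p\<in>F. fst p \<times> snd p)"
  proof
    fix x assume x: "x \<in> A \<times> B"
    then have "x \<in> X \<times> X" "x \<notin> Z" using AX BX Z by auto
    then obtain p where "p \<in> F" "x \<notin> Sent X (fst p) (snd p)" using F(3) by blast
    then show "x \<in> (\<Union>p\<in>F. fst p \<times> snd p)" using \<open>x \<in> X \<times> X\<close>
      unfolding Sent_def by (cases x) auto
  qed
  then show "q \<in> nd X V" using cover[OF qu F(1)] F(2) AX BX q by blast
qed

lemma W0_qprox:
  assumes qu: "quasi_uniformity X V"
  shows "qprox X (W0 X V) = qprox X V"
proof (rule set_eqI)
  fix q :: "'a set \<times> 'a set"
  obtain A B where q: "q = (A, B)" by force
  show "q \<in> qprox X (W0 X V) \<longleftrightarrow> q \<in> qprox X V"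
    unfolding q qprox_nd W0_nd[OF qu] ..
qed

lemma omega_eq:
  assumes qu: "quasi_uniformity X V"
  shows "qu_omega X V = W0 X V"
  unfolding qu_omega_def
proof (rule the_equality)
  show "W0 X V \<in> qprox_class X (qprox X V) \<and> (\<forall>W'\<in>qprox_class X (qprox X V). W0 X V \<subseteq> W')"
    using W0_qu[OF qu] W0_qprox[OF qu] W0_sub unfolding qprox_class_def by blast
next
  fix W assume h: "W \<in> qprox_class X (qprox X V) \<and> (\<forall>W'\<in>qprox_class X (qprox X V). W \<subseteq> W')"
  then have "W \<subseteq> W0 X V" using W0_qu[OF qu] W0_qprox[OF qu] unfolding qprox_class_def by blast
  moreover have "W0 X V \<subseteq> W" using h W0_sub unfolding qprox_class_def by blast
  ultimately show "W = W0 X V" by blast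
qed

theorem lemma2p2:
  fixes \<tau> :: "'a topology" and \<V> :: "('a \<times> 'a) set set" and U :: "('a \<times> 'a) set"
    and A :: "'a set"
  assumes "\<V> \<in> Tqu \<tau>"
    and "U \<in> \<V>" and "U O U \<subseteq> U"
    and "A \<subseteq> topspace \<tau>"
  shows "U `` A \<in> Bset \<tau> (qu_omega (topspace \<tau>) \<V>)"
proof -
  define X where "X = topspace \<tau>"
  have qu: "quasi_uniformity X \<V>" and comp: "qu_compatible \<tau> \<V>"
    using assms(1) unfolding Tqu_def X_def by auto
  have UX: "U \<subseteq> X \<times> X" using qu_sub[OF qu assms(2)] .
  define N where "N = U `` A"
  have NX: "N \<subseteq> X" using UX unfolding N_def by auto
  have tr: "\<And>x. x \<in> N \<Longrightarrow> U `` {x} \<subseteq> N" using assms(3) unfolding N_def by blast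
  have op: "openin \<tau> N"
    using comp NX tr assms(2) unfolding qu_compatible_def X_def by blast
  have "(N \<times> (X - N)) \<inter> U = {}" using tr by blast
  then have "(N, X - N) \<in> nd X \<V>"
    unfolding nd_def using NX assms(2) by blast
  then have "Sent X N (X - N) \<in> W0 X \<V>" by (rule Sent_W0)
  moreover have "Sent X N (X - N) = UN_ent X N"
    using NX unfolding Sent_def UN_ent_def by auto
  ultimately show ?thesis using op omega_eq[OF qu]
    unfolding Bset_def N_def X_def by simp
qed

end
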